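(* Let $S$ be any set of $\omega$-sharing groups and let $\{x_1/t_1\}\cup\theta$ be an idempotent substitution, where $\theta$ is an idempotent substitution with $x_1\notin\mathrm{dom}(\theta)$. Then \[ \mathrm{mgu_p}(S,\{x_1/t_1\}\cup\theta)=\mathrm{mgu_p}\bigl(\mathrm{mgu_p}(S,\{x_1/t_1\}),\theta\bigr). \]
   Context: Fix a first-order signature and a denumerable set of variables $\mathcal V$. For a term $t$ and variable $v$, $\mathit{occ}(v,t)$ is the number of occurrences of $v$ in $t$. An $\omega$-sharing group is a multiset of variables with finite support, i.e. a function $B:\mathcal V\to\mathbb N$ that is nonzero on only finitely many variables; $\{\!\!\{\}\!\!\}$ is the empty multiset, and the sum of multisets is $(A\uplus B)(v)=A(v)+B(v)$. The multiplicity of an $\omega$-sharing group $B$ in a term $t$ is $\chi(B,t)=\sum_{v} B(v)\cdot\mathit{occ}(v,t)$. A multigraph $G=\langle N_G,E_G,\mathrm{src}_G,\mathrm{tgt}_G\rangle$ consists of a nonempty set of nodes $N_G$, a set of edges $E_G$, and functions $\mathrm{src}_G,\mathrm{tgt}_G:E_G\to N_G$ (multiple distinct edges, including self-loops, may join the same nodes). The out-degree (in-degree) of $n$ is the number of edges $e$ with $\mathrm{src}_G(e)=n$ (resp. $\mathrm{tgt}_G(e)=n$). A path between $n_1$ and $n_k$ is a nonempty sequence of nodes $n_1\dots n_k$ such that consecutive nodes are joined by an edge in either direction; $G$ is connected if every pair of nodes is joined by a path. A (parallel) sharing graph for a set $S$ of $\omega$-sharing groups and an idempotent substitution $\theta=\{x_1/t_1,\dots,x_p/t_p\}$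 (with $p\ge 0$) is a family $\mathcal G=\{G^i\}_{i\in[1,p]}$ of multigraphs over a common node set $N_{\mathcal G}$, with a labeling $l_{\mathcal G}:N_{\mathcal G}\to S$, such that: (i) for every node $n$ and every $i$, the out-degree of $n$ in $G^i$ equals $\chi(l_{\mathcal G}(n),x_i)$ and the in-degree of $n$ in $G^i$ equals $\chi(l_{\mathcal G}(n),t_i)$; (ii) the edge sets $E_{G^i}$ are pairwise disjoint; (iii) the flattening of $\mathcal G$, i.e. the multigraph with nodes $N_{\mathcal G}$, edges $\bigcup_i E_{G^i}$ and source/target inherited from the layers, is connected. The resultant $\omega$-sharing group is $\mathit{res}(\mathcal G)=\biguplus_{n\in N_{\mathcal G}} l_{\mathcal G}(n)$. The parallel abstract unification is $\mathrm{mgu_p}(S,\theta)=\{\mathit{res}(\mathcal G)\mid \mathcal G \text{ a sharing graph for } S \text{ and } \theta\}$. (When $\theta=\epsilon$ is empty, $p=0$ and $\mathrm{mgu_p}(S,\epsilon)=S$.) *)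

theory Defs
  imports Main "HOL-Library.Multiset"
begin

datatype ('f, 'v) trm = Var 'v | Fn 'f "('f, 'v) trm list"

fun occ :: "'v \<Rightarrow> ('f, 'v) trm \<Rightarrow> nat" where
  "occ v (Var w) = (if v = w then 1 else 0)"
| "occ v (Fn f ts) = sum_list (map (occ v) ts)"

definition sdom :: "('v \<Rightarrow> ('f, 'v) trm) \<Rightarrow> 'v set" where
  "sdom \<sigma> = {x. \<sigma> x \<noteq> Var x}"

fun subst_apply :: "('v \<Rightarrow> ('f, 'v) trm) \<Rightarrow> ('f, 'v) trm \<Rightarrow> ('f, 'v) trm" where
  "subst_apply \<sigma> (Var x) = \<sigma> x"
| "subst_apply \<sigma> (Fn f ts) = Fn f (map (subst_apply \<sigma>) ts)"

definition is_subst :: "('v \<Rightarrow> ('f, 'v) trm) \<Rightarrow> bool" where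
  "is_subst \<sigma> \<longleftrightarrow> finite (sdom \<sigma>)"

definition idempotent :: "('v \<Rightarrow> ('f, 'v) trm) \<Rightarrow> bool" where
  "idempotent \<sigma> \<longleftrightarrow> is_subst \<sigma> \<and> (\<forall>t. subst_apply \<sigma> (subst_apply \<sigma> t) = subst_apply \<sigma> t)"

text \<open>omega-sharing groups are finite multisets of variables; multiplicity in a term.\<close>
definition chi :: "'v multiset \<Rightarrow> ('f, 'v) trm \<Rightarrow> nat" where
  "chi B t = (\<Sum>v\<in>set_mset B. count B v * occ v t)"

text \<open>A (parallel) sharing graph for S and \<sigma>: a finite nonempty node set N, for each
  binding variable x \<in> sdom \<sigma> a layer multigraph with edge set E x and source/target
  maps src x, tgt x, and a labelling lab of nodes by elements of S.\<close>
definition sharing_graph ::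
  "'v multiset set \<Rightarrow> ('v \<Rightarrow> ('f, 'v) trm) \<Rightarrow> nat set \<Rightarrow> ('v \<Rightarrow> nat set)
   \<Rightarrow> ('v \<Rightarrow> nat \<Rightarrow> nat) \<Rightarrow> ('v \<Rightarrow> nat \<Rightarrow> nat) \<Rightarrow> (nat \<Rightarrow> 'v multiset) \<Rightarrow> bool" where
  "sharing_graph S \<sigma> N E src tgt lab \<longleftrightarrow>
     finite N \<and> N \<noteq> {} \<and>
     (\<forall>n\<in>N. lab n \<in> S) \<and>
     (\<forall>x\<in>sdom \<sigma>. finite (E x) \<and> (\<forall>e\<in>E x. src x e \<in> N \<and> tgt x e \<in> N)) \<and>
     (\<forall>n\<in>N. \<forall>x\<in>sdom \<sigma>.
        card {e\<in>E x. src x e = n} = chi (lab n) (Var x :: ('f, 'v) trm) \<and>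
        card {e\<in>E x. tgt x e = n} = chi (lab n) (\<sigma> x)) \<and>
     (\<forall>x\<in>sdom \<sigma>. \<forall>y\<in>sdom \<sigma>. x \<noteq> y \<longrightarrow> E x \<inter> E y = {}) \<and>
     (let R = {(src x e, tgt x e) | x e. x \<in> sdom \<sigma> \<and> e \<in> E x}
      in \<forall>n\<in>N. \<forall>m\<in>N. (n, m) \<in> (R \<union> R\<inverse>)\<^sup>*)"

definition mgu_p :: "'v multiset set \<Rightarrow> ('v \<Rightarrow> ('f, 'v) trm) \<Rightarrow> 'v multiset set" where
  "mgu_p S \<sigma> = {(\<Sum>n\<in>N. lab n) | N E src tgt lab. sharing_graph S \<sigma> N E src tgt lab}"

end

theory Submission
  imports Defs "HOL-Library.Nat_Bijection"
begin


lemma chi_superset: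
  assumes "finite V" "set_mset B \<subseteq> V"
  shows "chi B t = (\<Sum>v\<in>V. count B v * occ v t)"
  unfolding chi_def
  by (rule sum.mono_neutral_left) (use assms in \<open>auto simp: not_in_iff\<close>)

lemma chi_add: "chi (A + B) t = chi A t + chi B t"
proof -
  let ?V = "set_mset A \<union> set_mset B"
  have "chi (A+B) t = (\<Sum>v\<in>?V. count (A+B) v * occ v t)" by (rule chi_superset) auto
  also have "\<dots> = (\<Sum>v\<in>?V. count A v * occ v t) + (\<Sum>v\<in>?V. count B v * occ v t)"
    by (simp add: sum.distrib algebra_simps)
  also have "\<dots> = chi A t + chi B t"
    using chi_superset[of ?V A t] chi_superset[of ?V B t] by auto
  finally show ?thesis .
qed

lemma chi_empty: "chi {#} t = 0" by (simp add: chi_def)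

lemma chi_sum: "chi (\<Sum>a\<in>A. f a) t = (\<Sum>a\<in>A. chi (f a) t)"
  by (induction A rule: infinite_finite_induct) (auto simp: chi_empty chi_add)

lemma card_sum_fibres:
  assumes "finite E" "finite A"
  shows "card {e\<in>E. g e \<in> A} = (\<Sum>n\<in>A. card {e\<in>E. g e = n})"
proof -
  have "{e\<in>E. g e \<in> A} = (\<Union>n\<in>A. {e\<in>E. g e = n})" by auto
  moreover have "card (\<Union>n\<in>A. {e\<in>E. g e = n}) = (\<Sum>n\<in>A. card {e\<in>E. g e = n})"
    by (rule card_UN_disjoint) (use assms in auto)
  ultimately show ?thesis by simp
qed

lemma distribute1:
  assumes "finite B" "finite A" "card A = (\<Sum>b\<in>B. w b)"
  shows "\<exists>h. (\<forall>a\<in>A. h a \<in> B) \<and> (\<forall>b\<in>B. card {a\<in>A. h a = b} = w b)"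
  using assms
proof (induction B arbitrary: A rule: finite_induct)
  case empty
  then show ?case by auto
next
  case (insert b B)
  then have "w b \<le> card A" by simp
  then obtain A0 where A0: "A0 \<subseteq> A" "card A0 = w b"
    by (meson obtain_subset_with_card_n)
  have fA0: "finite A0" using A0 insert.prems finite_subset by blast
  have "card (A - A0) = (\<Sum>b\<in>B. w b)"
    using insert A0 fA0 by (simp add: card_Diff_subset)
  then obtain h where h: "\<forall>a\<in>A - A0. h a \<in> B" "\<forall>b\<in>B. card {a\<in>A - A0. h a = b} = w b"
    using insert.IH[of "A - A0"] insert.prems by auto
  define h' where "h' a = (if a \<in> A0 then b else h a)" for a
  have "\<forall>a\<in>A. h' a \<in> insert b B" using h by (auto simp: h'_def)
  moreover have "card {a\<in>A. h' a = b} = w b"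
  proof -
    have "{a\<in>A. h' a = b} = A0" using h A0 insert.hyps by (auto simp: h'_def)
    then show ?thesis using A0 by simp
  qed
  moreover have "card {a\<in>A. h' a = c} = w c" if "c \<in> B" for c
  proof -
    have "{a\<in>A. h' a = c} = {a\<in>A - A0. h a = c}" using that insert.hyps by (auto simp: h'_def)
    then show ?thesis using h that by simp
  qed
  ultimately show ?case by auto
qed

lemma distribute:
  assumes "finite A" "g ` A \<subseteq> Rs"
    and "\<And>r. r \<in> Rs \<Longrightarrow> finite (B r) \<and> card {a\<in>A. g a = r} = (\<Sum>b\<in>B r. w b)"
  shows "\<exists>h. (\<forall>a\<in>A. h a \<in> B (g a)) \<and> (\<forall>r\<in>Rs. \<forall>b\<in>B r. card {a\<in>A. g a = r \<and> h a = b} = w b)"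
proof -
  have "\<forall>r. \<exists>h. r \<in> Rs \<longrightarrow> (\<forall>a\<in>{a\<in>A. g a = r}. h a \<in> B r) \<and> (\<forall>b\<in>B r. card {a\<in>{a\<in>A. g a = r}. h a = b} = w b)"
  proof
    fix r
    show "\<exists>h. r \<in> Rs \<longrightarrow> (\<forall>a\<in>{a\<in>A. g a = r}. h a \<in> B r) \<and> (\<forall>b\<in>B r. card {a\<in>{a\<in>A. g a = r}. h a = b} = w b)"
    proof (cases "r \<in> Rs")
      case True
      have "finite (B r)" "card {a\<in>A. g a = r} = (\<Sum>b\<in>B r. w b)" using assms(3)[OF True] by auto
      moreover have "finite {a\<in>A. g a = r}" using assms(1) by simp
      ultimately obtain h where "(\<forall>a\<in>{a\<in>A. g a = r}. h a \<in> B r) \<and> (\<forall>b\<in>B r. card {a\<in>{a\<in>A. g a = r}. h a = b} = w b)"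
        using distribute1[of "B r" "{a\<in>A. g a = r}" w] by blast
      then show ?thesis by blast
    qed auto
  qed
  then have "\<exists>H. \<forall>r. r \<in> Rs \<longrightarrow> (\<forall>a\<in>{a\<in>A. g a = r}. H r a \<in> B r) \<and> (\<forall>b\<in>B r. card {a\<in>{a\<in>A. g a = r}. H r a = b} = w b)"
    by (rule choice)
  then obtain H where H0: "\<forall>r. r \<in> Rs \<longrightarrow> (\<forall>a\<in>{a\<in>A. g a = r}. H r a \<in> B r) \<and> (\<forall>b\<in>B r. card {a\<in>{a\<in>A. g a = r}. H r a = b} = w b)"
    by blast
  have H: "\<And>r. r \<in> Rs \<Longrightarrow> (\<forall>a\<in>{a\<in>A. g a = r}. H r a \<in> B r) \<and> (\<forall>b\<in>B r. card {a\<in>{a\<in>A. g a = r}. H r a = b} = w b)"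
    using H0 by blast
  define h where "h a = H (g a) a" for a
  have "\<forall>a\<in>A. h a \<in> B (g a)"
  proof
    fix a assume "a \<in> A"
    then have "g a \<in> Rs" using assms(2) by auto
    then show "h a \<in> B (g a)" using H[of "g a"] \<open>a \<in> A\<close> by (simp add: h_def)
  qed
  moreover have "card {a\<in>A. g a = r \<and> h a = b} = w b" if "r \<in> Rs" "b \<in> B r" for r b
  proof -
    have "{a\<in>A. g a = r \<and> h a = b} = {a\<in>{a\<in>A. g a = r}. H r a = b}" by (auto simp: h_def)
    then show ?thesis using H[OF that(1)] that(2) by simp
  qed
  ultimately show ?thesis by blast
qed

definition rel :: "'v set \<Rightarrow> ('v \<Rightarrow> nat set) \<Rightarrow> ('v \<Rightarrow> nat \<Rightarrow> nat) \<Rightarrow> ('v \<Rightarrow> nat \<Rightarrow> nat) \<Rightarrow> (nat \<times> nat) set" where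
  "rel D E src tgt = {(src x e, tgt x e) | x e. x \<in> D \<and> e \<in> E x}"

lemma sg_def2:
  fixes \<sigma> :: "'v \<Rightarrow> ('f, 'v) trm"
  shows
  "sharing_graph S \<sigma> N E src tgt lab \<longleftrightarrow>
     finite N \<and> N \<noteq> {} \<and>
     (\<forall>n\<in>N. lab n \<in> S) \<and>
     (\<forall>x\<in>sdom \<sigma>. finite (E x) \<and> (\<forall>e\<in>E x. src x e \<in> N \<and> tgt x e \<in> N)) \<and>
     (\<forall>n\<in>N. \<forall>x\<in>sdom \<sigma>.
        card {e\<in>E x. src x e = n} = chi (lab n) (Var x :: ('f, 'v) trm) \<and>
        card {e\<in>E x. tgt x e = n} = chi (lab n) (\<sigma> x)) \<and>
     (\<forall>x\<in>sdom \<sigma>. \<forall>y\<in>sdom \<sigma>. x \<noteq> y \<longrightarrow> E x \<inter> E y = {}) \<and>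
     (\<forall>n\<in>N. \<forall>m\<in>N. (n, m) \<in> (rel (sdom \<sigma>) E src tgt \<union> (rel (sdom \<sigma>) E src tgt)\<inverse>)\<^sup>*)"
  by (simp add: sharing_graph_def rel_def Let_def)

lemma mgu_p_iff: "M \<in> mgu_p S \<sigma> \<longleftrightarrow> (\<exists>N E src tgt lab. M = (\<Sum>n\<in>N. lab n) \<and> sharing_graph S \<sigma> N E src tgt lab)"
  by (auto simp: mgu_p_def)

lemma path_sym: "(a,b) \<in> (R \<union> R\<inverse>)\<^sup>* \<Longrightarrow> (b,a) \<in> (R \<union> R\<inverse>)\<^sup>*"
proof -
  have "sym ((R \<union> R\<inverse>)\<^sup>*)" by (simp add: sym_rtrancl sym_Un_converse)
  then show "(a,b) \<in> (R \<union> R\<inverse>)\<^sup>* \<Longrightarrow> (b,a) \<in> (R \<union> R\<inverse>)\<^sup>*" by (meson symD)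
qed

lemma path_map:
  assumes "(a,b) \<in> (R \<union> R\<inverse>)\<^sup>*"
    and "\<And>u v. (u,v) \<in> R \<Longrightarrow> (f u, f v) \<in> (R' \<union> R'\<inverse>)\<^sup>*"
  shows "(f a, f b) \<in> (R' \<union> R'\<inverse>)\<^sup>*"
  using assms(1)
proof (induction rule: rtrancl_induct)
  case base
  then show ?case by simp
next
  case (step v w)
  have "(f v, f w) \<in> (R' \<union> R'\<inverse>)\<^sup>*"
  proof (cases "(v,w) \<in> R")
    case True
    then show ?thesis using assms(2) by simp
  next
    case False
    then have "(w,v) \<in> R" using step.hyps(2) by auto
    then show ?thesis using path_sym[OF assms(2)] by simp
  qed
  then show ?case using step.IH by (meson rtrancl_trans)
qed

lemma path_restrict:
  assumes "(a,b) \<in> (R \<union> R\<inverse>)\<^sup>*"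
  shows "(a,b) \<in> ({(u,v)\<in>R. (a,u) \<in> (R \<union> R\<inverse>)\<^sup>*} \<union> {(u,v)\<in>R. (a,u) \<in> (R \<union> R\<inverse>)\<^sup>*}\<inverse>)\<^sup>*"
  using assms
proof (induction rule: rtrancl_induct)
  case base
  then show ?case by simp
next
  case (step v w)
  show ?case
  proof (cases "(v,w) \<in> R")
    case True
    then have "(v,w) \<in> {(u,v)\<in>R. (a,u) \<in> (R \<union> R\<inverse>)\<^sup>*}" using step.hyps(1) by simp
    then show ?thesis using step.IH by (meson UnI1 rtrancl.rtrancl_into_rtrancl)
  next
    case False
    then have "(w,v) \<in> R" using step.hyps(2) by auto
    moreover have "(a,w) \<in> (R \<union> R\<inverse>)\<^sup>*" using step.hyps by (meson rtrancl.rtrancl_into_rtrancl)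
    ultimately have "(w,v) \<in> {(u,v)\<in>R. (a,u) \<in> (R \<union> R\<inverse>)\<^sup>*}" by simp
    then show ?thesis using step.IH by (meson UnI2 converseI rtrancl.rtrancl_into_rtrancl)
  qed
qed



lemma sg_intro:
  fixes \<sigma> :: "'v \<Rightarrow> ('f, 'v) trm"
  assumes "finite N" "N \<noteq> {}" "\<And>n. n \<in> N \<Longrightarrow> lab n \<in> S"
    "\<And>x. x \<in> sdom \<sigma> \<Longrightarrow> finite (E x)"
    "\<And>x e. x \<in> sdom \<sigma> \<Longrightarrow> e \<in> E x \<Longrightarrow> src x e \<in> N"
    "\<And>x e. x \<in> sdom \<sigma> \<Longrightarrow> e \<in> E x \<Longrightarrow> tgt x e \<in> N"
    "\<And>n x. n \<in> N \<Longrightarrow> x \<in> sdom \<sigma> \<Longrightarrow> card {e\<in>E x. src x e = n} = chi (lab n) (Var x :: ('f, 'v) trm)"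
    "\<And>n x. n \<in> N \<Longrightarrow> x \<in> sdom \<sigma> \<Longrightarrow> card {e\<in>E x. tgt x e = n} = chi (lab n) (\<sigma> x)"
    "\<And>x y. x \<in> sdom \<sigma> \<Longrightarrow> y \<in> sdom \<sigma> \<Longrightarrow> x \<noteq> y \<Longrightarrow> E x \<inter> E y = {}"
    "\<And>n m. n \<in> N \<Longrightarrow> m \<in> N \<Longrightarrow> (n, m) \<in> (rel (sdom \<sigma>) E src tgt \<union> (rel (sdom \<sigma>) E src tgt)\<inverse>)\<^sup>*"
  shows "sharing_graph S \<sigma> N E src tgt lab"
  unfolding sg_def2 using assms by blast

lemma sgD:
  fixes \<sigma> :: "'v \<Rightarrow> ('f, 'v) trm"
  assumes "sharing_graph S \<sigma> N E src tgt lab"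
  shows "finite N" "N \<noteq> {}" "\<And>n. n \<in> N \<Longrightarrow> lab n \<in> S"
    "\<And>x. x \<in> sdom \<sigma> \<Longrightarrow> finite (E x)"
    "\<And>x e. x \<in> sdom \<sigma> \<Longrightarrow> e \<in> E x \<Longrightarrow> src x e \<in> N"
    "\<And>x e. x \<in> sdom \<sigma> \<Longrightarrow> e \<in> E x \<Longrightarrow> tgt x e \<in> N"
    "\<And>n x. n \<in> N \<Longrightarrow> x \<in> sdom \<sigma> \<Longrightarrow> card {e\<in>E x. src x e = n} = chi (lab n) (Var x :: ('f, 'v) trm)"
    "\<And>n x. n \<in> N \<Longrightarrow> x \<in> sdom \<sigma> \<Longrightarrow> card {e\<in>E x. tgt x e = n} = chi (lab n) (\<sigma> x)"
    "\<And>x y. x \<in> sdom \<sigma> \<Longrightarrow> y \<in> sdom \<sigma> \<Longrightarrow> x \<noteq> y \<Longrightarrow> E x \<inter> E y = {}"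
    "\<And>n m. n \<in> N \<Longrightarrow> m \<in> N \<Longrightarrow> (n, m) \<in> (rel (sdom \<sigma>) E src tgt \<union> (rel (sdom \<sigma>) E src tgt)\<inverse>)\<^sup>*"
  using assms unfolding sg_def2 by blast+



lemma dir1:
  fixes \<theta> \<sigma>1 \<sigma>' :: "'v \<Rightarrow> ('f, 'v) trm"
  assumes D: "x1 \<notin> D" "sdom \<sigma>' = insert x1 D" "sdom \<theta> = D" "sdom \<sigma>1 = {x1}"
      "\<sigma>1 x1 = \<sigma>' x1" "\<And>y. y \<in> D \<Longrightarrow> \<sigma>' y = \<theta> y"
    and G: "sharing_graph S \<sigma>' N E src tgt lab"
  shows "(\<Sum>n\<in>N. lab n) \<in> mgu_p (mgu_p S \<sigma>1) \<theta>"
proof -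
  note g = sgD[OF G, unfolded D(2)]
  define R1 where "R1 = rel {x1} E src tgt"
  define R where "R = rel (insert x1 D) E src tgt"
  have R1N: "u \<in> N \<and> v \<in> N" if "(u,v) \<in> R1" for u v
    using that g(5,6) by (auto simp: R1_def rel_def)
  have QN: "b \<in> N" if "(a,b) \<in> (R1 \<union> R1\<inverse>)\<^sup>*" "a \<in> N" for a b
    using that(1,2) by (induction rule: rtrancl_induct) (use R1N in auto)
  define cls where "cls n = {m\<in>N. (n,m) \<in> (R1 \<union> R1\<inverse>)\<^sup>*}" for n
  define rep where "rep n = Min (cls n)" for n
  have rep_cls: "rep n \<in> N \<and> (n, rep n) \<in> (R1 \<union> R1\<inverse>)\<^sup>*" if "n \<in> N" for n
  proof -
    have "finite (cls n)" using g(1) by (simp add: cls_def)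
    moreover have "n \<in> cls n" using that by (simp add: cls_def)
    ultimately have "rep n \<in> cls n" unfolding rep_def by (intro Min_in) auto
    then show ?thesis by (simp add: cls_def)
  qed
  have rep_eq: "rep n = rep m \<longleftrightarrow> (n,m) \<in> (R1 \<union> R1\<inverse>)\<^sup>*" if "n \<in> N" "m \<in> N" for n m
  proof
    assume "rep n = rep m"
    then show "(n,m) \<in> (R1 \<union> R1\<inverse>)\<^sup>*"
      using rep_cls[OF that(1)] rep_cls[OF that(2)] path_sym by (metis rtrancl_trans)
  next
    assume nm: "(n,m) \<in> (R1 \<union> R1\<inverse>)\<^sup>*"
    have "cls n = cls m"
    proof (intro set_eqI iffI)
      fix k assume "k \<in> cls n"
      then show "k \<in> cls m" using path_sym[OF nm] unfolding cls_def by (blast intro: rtrancl_trans)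
    next
      fix k assume "k \<in> cls m"
      then show "k \<in> cls n" using nm unfolding cls_def by (blast intro: rtrancl_trans)
    qed
    then show "rep n = rep m" by (simp add: rep_def)
  qed
  define Nr where "Nr r = {n\<in>N. rep n = r}" for r
  define Er where "Er r x = {e\<in>E x1. rep (src x1 e) = r}" for r and x :: 'v
  define lab' where "lab' r = (\<Sum>n\<in>Nr r. lab n)" for r
  have x1in: "x1 \<in> insert x1 D" by simp
  have comp: "sharing_graph S \<sigma>1 (Nr r) (Er r) src tgt lab" if r: "r \<in> rep ` N" for r
  proof -
    obtain a where a: "a \<in> N" "r = rep a" using r by blast
    have tgt_rep: "rep (tgt x1 e) = rep (src x1 e)" if "e \<in> E x1" for e
    proof -
      have "(src x1 e, tgt x1 e) \<in> R1" using that by (auto simp: R1_def rel_def)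
      then show ?thesis using rep_eq R1N by blast
    qed
    show ?thesis
      apply (rule sg_intro)
               apply (unfold D(4))
      subgoal using g(1) by (simp add: Nr_def)
      subgoal using a by (auto simp: Nr_def)
      subgoal using g(3) by (simp add: Nr_def)
      subgoal using g(4)[OF x1in] by (simp add: Er_def)
      subgoal for x e using g(5)[OF x1in] by (auto simp: Er_def Nr_def)
      subgoal for x e using g(6)[OF x1in] tgt_rep by (auto simp: Er_def Nr_def)
      subgoal for n x
      proof -
        assume n: "n \<in> Nr r" and x: "x \<in> {x1}"
        have "{e\<in>Er r x. src x e = n} = {e\<in>E x1. src x1 e = n}" using n x by (auto simp: Er_def Nr_def)
        then show ?thesis using g(7)[of n x1] n x by (simp add: Nr_def)
      qed
      subgoal for n x
      proof -
        assume n: "n \<in> Nr r" and x: "x \<in> {x1}"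
        have "{e\<in>Er r x. tgt x e = n} = {e\<in>E x1. tgt x1 e = n}" using n x tgt_rep by (auto simp: Er_def Nr_def)
        then show ?thesis using g(8)[of n x1] n x D(5) by (simp add: Nr_def)
      qed
      subgoal by simp
      subgoal for n m
      proof -
        assume n: "n \<in> Nr r" and m: "m \<in> Nr r"
        then have "n \<in> N" "m \<in> N" "rep n = rep m" by (auto simp: Nr_def)
        then have nm: "(n,m) \<in> (R1 \<union> R1\<inverse>)\<^sup>*" using rep_eq by blast
        let ?R' = "{(u,v)\<in>R1. (n,u) \<in> (R1 \<union> R1\<inverse>)\<^sup>*}"
        have sub: "?R' \<subseteq> rel {x1} (Er r) src tgt"
        proof
          fix p assume "p \<in> ?R'"
          then obtain e where e: "e \<in> E x1" "p = (src x1 e, tgt x1 e)" "(n, src x1 e) \<in> (R1 \<union> R1\<inverse>)\<^sup>*"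
            by (auto simp: R1_def rel_def)
          have "n \<in> N" "rep n = r" using n by (auto simp: Nr_def)
          then have "src x1 e \<in> N" using QN e(3) by blast
          then have "rep (src x1 e) = r" using rep_eq e(3) \<open>n \<in> N\<close> \<open>rep n = r\<close> by metis
          then show "p \<in> rel {x1} (Er r) src tgt" using e by (auto simp: rel_def Er_def)
        qed
        have "(n,m) \<in> (?R' \<union> ?R'\<inverse>)\<^sup>*" by (rule path_restrict[OF nm])
        moreover have "(?R' \<union> ?R'\<inverse>)\<^sup>* \<subseteq> (rel {x1} (Er r) src tgt \<union> (rel {x1} (Er r) src tgt)\<inverse>)\<^sup>*"
          using sub by (intro rtrancl_mono Un_mono converse_mono[THEN iffD2]) auto
        ultimately show ?thesis by blast
      qed
      done
  qed
  have labin: "lab' r \<in> mgu_p S \<sigma>1" if "r \<in> rep ` N" for r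
    unfolding mgu_p_iff lab'_def using comp[OF that] by blast
  have coll: "sharing_graph (mgu_p S \<sigma>1) \<theta> (rep ` N) E (\<lambda>x e. rep (src x e)) (\<lambda>x e. rep (tgt x e)) lab'"
    apply (rule sg_intro)
             apply (unfold D(3))
    subgoal using g(1) by simp
    subgoal using g(2) by simp
    subgoal using labin by simp
    subgoal for x using g(4) by simp
    subgoal for x e using g(5) by simp
    subgoal for x e using g(6) by simp
    subgoal for r y
    proof -
      assume r: "r \<in> rep ` N" and y: "y \<in> D"
      have "{e\<in>E y. rep (src y e) = r} = {e\<in>E y. src y e \<in> Nr r}" using g(5) y by (auto simp: Nr_def)
      also have "card \<dots> = (\<Sum>n\<in>Nr r. card {e\<in>E y. src y e = n})"
        by (rule card_sum_fibres) (use g(4) y g(1) in \<open>auto simp: Nr_def\<close>)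
      also have "\<dots> = (\<Sum>n\<in>Nr r. chi (lab n) (Var y :: ('f,'v) trm))"
        by (rule sum.cong) (use g(7) y in \<open>auto simp: Nr_def\<close>)
      also have "\<dots> = chi (lab' r) (Var y :: ('f,'v) trm)" by (simp add: lab'_def chi_sum)
      finally show ?thesis .
    qed
    subgoal for r y
    proof -
      assume r: "r \<in> rep ` N" and y: "y \<in> D"
      have "{e\<in>E y. rep (tgt y e) = r} = {e\<in>E y. tgt y e \<in> Nr r}" using g(6) y by (auto simp: Nr_def)
      also have "card \<dots> = (\<Sum>n\<in>Nr r. card {e\<in>E y. tgt y e = n})"
        by (rule card_sum_fibres) (use g(4) y g(1) in \<open>auto simp: Nr_def\<close>)
      also have "\<dots> = (\<Sum>n\<in>Nr r. chi (lab n) (\<theta> y))"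
        by (rule sum.cong) (use g(8) y D(6) in \<open>auto simp: Nr_def\<close>)
      also have "\<dots> = chi (lab' r) (\<theta> y)" by (simp add: lab'_def chi_sum)
      finally show ?thesis .
    qed
    subgoal for x y using g(9) by simp
    subgoal for r s
    proof -
      assume "r \<in> rep ` N" "s \<in> rep ` N"
      then obtain a b where ab: "a \<in> N" "b \<in> N" "r = rep a" "s = rep b" by blast
      have "(a,b) \<in> (R \<union> R\<inverse>)\<^sup>*" using g(10)[OF ab(1,2)] by (simp add: R_def)
      then have "(rep a, rep b) \<in> (rel D E (\<lambda>x e. rep (src x e)) (\<lambda>x e. rep (tgt x e)) \<union> (rel D E (\<lambda>x e. rep (src x e)) (\<lambda>x e. rep (tgt x e)))\<inverse>)\<^sup>*"
      proof (rule path_map)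
        fix u v assume "(u,v) \<in> R"
        then obtain x e where xe: "x \<in> insert x1 D" "e \<in> E x" "u = src x e" "v = tgt x e"
          by (auto simp: R_def rel_def)
        show "(rep u, rep v) \<in> (rel D E (\<lambda>x e. rep (src x e)) (\<lambda>x e. rep (tgt x e)) \<union> (rel D E (\<lambda>x e. rep (src x e)) (\<lambda>x e. rep (tgt x e)))\<inverse>)\<^sup>*"
        proof (cases "x = x1")
          case True
          then have "(u,v) \<in> R1" using xe by (auto simp: R1_def rel_def)
          then have "rep u = rep v" using R1N rep_eq by blast
          then show ?thesis by simp
        next
          case False
          then have "(rep u, rep v) \<in> rel D E (\<lambda>x e. rep (src x e)) (\<lambda>x e. rep (tgt x e))"
            using xe by (auto simp: rel_def)
          then show ?thesis by blast
        qed
      qed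
      then show ?thesis using ab by simp
    qed
    done
  have "(\<Sum>n\<in>N. lab n) = (\<Sum>r\<in>rep ` N. lab' r)"
    unfolding lab'_def Nr_def using g(1) by (rule sum.image_gen)
  then show ?thesis unfolding mgu_p_iff using coll by blast
qed



lemma dir2:
  fixes \<theta> \<sigma>1 \<sigma>' :: "'v \<Rightarrow> ('f, 'v) trm"
  assumes D: "x1 \<notin> D" "sdom \<sigma>' = insert x1 D" "sdom \<theta> = D" "sdom \<sigma>1 = {x1}"
      "\<sigma>1 x1 = \<sigma>' x1" "\<And>y. y \<in> D \<Longrightarrow> \<sigma>' y = \<theta> y"
    and G: "sharing_graph (mgu_p S \<sigma>1) \<theta> N' E' src' tgt' lab'"
  shows "(\<Sum>r\<in>N'. lab' r) \<in> mgu_p S \<sigma>'"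
proof -
  note g = sgD[OF G, unfolded D(3)]
  have "\<forall>r. \<exists>t. r \<in> N' \<longrightarrow> lab' r = (\<Sum>n\<in>fst t. (snd (snd (snd (snd t)))) n) \<and>
      sharing_graph S \<sigma>1 (fst t) (fst (snd t)) (fst (snd (snd t))) (fst (snd (snd (snd t)))) (snd (snd (snd (snd t))))"
  proof
    fix r
    show "\<exists>t. r \<in> N' \<longrightarrow> lab' r = (\<Sum>n\<in>fst t. (snd (snd (snd (snd t)))) n) \<and>
      sharing_graph S \<sigma>1 (fst t) (fst (snd t)) (fst (snd (snd t))) (fst (snd (snd (snd t)))) (snd (snd (snd (snd t))))"
    proof (cases "r \<in> N'")
      case True
      then have "lab' r \<in> mgu_p S \<sigma>1" using g(3) by blast
      then obtain Na Ea sa ta la where "lab' r = (\<Sum>n\<in>Na. la n)" "sharing_graph S \<sigma>1 Na Ea sa ta la"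
        unfolding mgu_p_iff by blast
      then show ?thesis by (intro exI[of _ "(Na, Ea, sa, ta, la)"]) simp
    qed auto
  qed
  then have "\<exists>T. \<forall>r. r \<in> N' \<longrightarrow> (lab' r = (\<Sum>n\<in>fst (T r). (snd (snd (snd (snd (T r))))) n) \<and>
      sharing_graph S \<sigma>1 (fst (T r)) (fst (snd (T r))) (fst (snd (snd (T r)))) (fst (snd (snd (snd (T r))))) (snd (snd (snd (snd (T r))))))"
    by (rule choice)
  then obtain T where T0: "\<forall>r. r \<in> N' \<longrightarrow> (lab' r = (\<Sum>n\<in>fst (T r). (snd (snd (snd (snd (T r))))) n) \<and>
      sharing_graph S \<sigma>1 (fst (T r)) (fst (snd (T r))) (fst (snd (snd (T r)))) (fst (snd (snd (snd (T r))))) (snd (snd (snd (snd (T r))))))" by blast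
  have T: "\<And>r. r \<in> N' \<Longrightarrow> lab' r = (\<Sum>n\<in>fst (T r). (snd (snd (snd (snd (T r))))) n) \<and>
      sharing_graph S \<sigma>1 (fst (T r)) (fst (snd (T r))) (fst (snd (snd (T r)))) (fst (snd (snd (snd (T r))))) (snd (snd (snd (snd (T r)))))" using T0 by blast
  define GN where "GN r = fst (T r)" for r
  define GE where "GE r = fst (snd (T r))" for r
  define Gs where "Gs r = fst (snd (snd (T r)))" for r
  define Gt where "Gt r = fst (snd (snd (snd (T r))))" for r
  define Gl where "Gl r = snd (snd (snd (snd (T r))))" for r
  have Glab: "lab' r = (\<Sum>n\<in>GN r. Gl r n)" and Gsg: "sharing_graph S \<sigma>1 (GN r) (GE r) (Gs r) (Gt r) (Gl r)"
    if "r \<in> N'" for r using T[OF that] unfolding GN_def GE_def Gs_def Gt_def Gl_def by auto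
  note gr = sgD[OF Gsg, unfolded D(4)]
  have x1s: "x1 \<in> {x1}" by simp
  define enc where "enc r n = prod_encode (r, n)" for r n
  have enc_eq[simp]: "enc r n = enc s m \<longleftrightarrow> r = s \<and> n = m" for r n s m by (simp add: enc_def)
  have dec_enc[simp]: "prod_decode (enc r n) = (r, n)" for r n by (simp add: enc_def)
  define Nn where "Nn = (\<lambda>(r,n). enc r n) ` Sigma N' GN"
  define lab where "lab p = (case prod_decode p of (r, n) \<Rightarrow> Gl r n)" for p
  have lab_enc[simp]: "lab (enc r n) = Gl r n" for r n by (simp add: lab_def)
  define B where "B r = enc r ` GN r" for r
  have finGN: "finite (GN r)" if "r \<in> N'" for r using gr(1)[OF that] .
  have sumB: "(\<Sum>b\<in>B r. chi (lab b) t) = chi (lab' r) t" if "r \<in> N'" for r and t :: "('f,'v) trm"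
  proof -
    have "inj_on (enc r) (GN r)" by (auto simp: inj_on_def)
    then have "(\<Sum>b\<in>B r. chi (lab b) t) = (\<Sum>n\<in>GN r. chi (Gl r n) t)"
      unfolding B_def by (simp add: sum.reindex)
    also have "\<dots> = chi (lab' r) t" using Glab[OF that] by (simp add: chi_sum)
    finally show ?thesis .
  qed
  have "\<forall>y. \<exists>h. y \<in> D \<longrightarrow> (\<forall>a\<in>E' y. h a \<in> B (src' y a)) \<and>
     (\<forall>r\<in>N'. \<forall>b\<in>B r. card {a\<in>E' y. src' y a = r \<and> h a = b} = chi (lab b) (Var y :: ('f,'v) trm))"
  proof
    fix y
    show "\<exists>h. y \<in> D \<longrightarrow> (\<forall>a\<in>E' y. h a \<in> B (src' y a)) \<and>
     (\<forall>r\<in>N'. \<forall>b\<in>B r. card {a\<in>E' y. src' y a = r \<and> h a = b} = chi (lab b) (Var y :: ('f,'v) trm))"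
    proof (cases "y \<in> D")
      case True
      have "\<exists>h. (\<forall>a\<in>E' y. h a \<in> B (src' y a)) \<and>
     (\<forall>r\<in>N'. \<forall>b\<in>B r. card {a\<in>E' y. src' y a = r \<and> h a = b} = (\<lambda>b. chi (lab b) (Var y :: ('f,'v) trm)) b)"
      proof (rule distribute)
        show "finite (E' y)" using g(4) True .
        show "src' y ` E' y \<subseteq> N'" using g(5) True by auto
        fix r assume r: "r \<in> N'"
        show "finite (B r) \<and> card {a\<in>E' y. src' y a = r} = (\<Sum>b\<in>B r. chi (lab b) (Var y :: ('f,'v) trm))"
          using finGN[OF r] g(7)[OF r True] sumB[OF r] by (simp add: B_def)
      qed
      then show ?thesis by blast
    qed auto
  qed
  then have "\<exists>HS. \<forall>y. y \<in> D \<longrightarrow> ((\<forall>a\<in>E' y. HS y a \<in> B (src' y a)) \<and>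
     (\<forall>r\<in>N'. \<forall>b\<in>B r. card {a\<in>E' y. src' y a = r \<and> HS y a = b} = chi (lab b) (Var y :: ('f,'v) trm)))"
    by (rule choice)
  then obtain HS where HS0: "\<forall>y. y \<in> D \<longrightarrow> ((\<forall>a\<in>E' y. HS y a \<in> B (src' y a)) \<and>
     (\<forall>r\<in>N'. \<forall>b\<in>B r. card {a\<in>E' y. src' y a = r \<and> HS y a = b} = chi (lab b) (Var y :: ('f,'v) trm)))" by blast
  have HS: "\<And>y. y \<in> D \<Longrightarrow> (\<forall>a\<in>E' y. HS y a \<in> B (src' y a)) \<and>
     (\<forall>r\<in>N'. \<forall>b\<in>B r. card {a\<in>E' y. src' y a = r \<and> HS y a = b} = chi (lab b) (Var y :: ('f,'v) trm))" using HS0 by blast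
  have "\<forall>y. \<exists>h. y \<in> D \<longrightarrow> (\<forall>a\<in>E' y. h a \<in> B (tgt' y a)) \<and>
     (\<forall>r\<in>N'. \<forall>b\<in>B r. card {a\<in>E' y. tgt' y a = r \<and> h a = b} = chi (lab b) (\<theta> y))"
  proof
    fix y
    show "\<exists>h. y \<in> D \<longrightarrow> (\<forall>a\<in>E' y. h a \<in> B (tgt' y a)) \<and>
     (\<forall>r\<in>N'. \<forall>b\<in>B r. card {a\<in>E' y. tgt' y a = r \<and> h a = b} = chi (lab b) (\<theta> y))"
    proof (cases "y \<in> D")
      case True
      have "\<exists>h. (\<forall>a\<in>E' y. h a \<in> B (tgt' y a)) \<and>
     (\<forall>r\<in>N'. \<forall>b\<in>B r. card {a\<in>E' y. tgt' y a = r \<and> h a = b} = (\<lambda>b. chi (lab b) (\<theta> y)) b)"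
      proof (rule distribute)
        show "finite (E' y)" using g(4) True .
        show "tgt' y ` E' y \<subseteq> N'" using g(6) True by auto
        fix r assume r: "r \<in> N'"
        show "finite (B r) \<and> card {a\<in>E' y. tgt' y a = r} = (\<Sum>b\<in>B r. chi (lab b) (\<theta> y))"
          using finGN[OF r] g(8)[OF r True] sumB[OF r] by (simp add: B_def)
      qed
      then show ?thesis by blast
    qed auto
  qed
  then have "\<exists>HT. \<forall>y. y \<in> D \<longrightarrow> ((\<forall>a\<in>E' y. HT y a \<in> B (tgt' y a)) \<and>
     (\<forall>r\<in>N'. \<forall>b\<in>B r. card {a\<in>E' y. tgt' y a = r \<and> HT y a = b} = chi (lab b) (\<theta> y)))"
    by (rule choice)
  then obtain HT where HT0: "\<forall>y. y \<in> D \<longrightarrow> ((\<forall>a\<in>E' y. HT y a \<in> B (tgt' y a)) \<and>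
     (\<forall>r\<in>N'. \<forall>b\<in>B r. card {a\<in>E' y. tgt' y a = r \<and> HT y a = b} = chi (lab b) (\<theta> y)))" by blast
  have HT: "\<And>y. y \<in> D \<Longrightarrow> (\<forall>a\<in>E' y. HT y a \<in> B (tgt' y a)) \<and>
     (\<forall>r\<in>N'. \<forall>b\<in>B r. card {a\<in>E' y. tgt' y a = r \<and> HT y a = b} = chi (lab b) (\<theta> y))" using HT0 by blast
  have HSb: "HS y a \<in> B (src' y a)" if "y \<in> D" "a \<in> E' y" for y a using HS[OF that(1)] that(2) by blast
  have HTb: "HT y a \<in> B (tgt' y a)" if "y \<in> D" "a \<in> E' y" for y a using HT[OF that(1)] that(2) by blast
  define E where "E x = (if x = x1 then (\<lambda>(r,e). 2 * enc r e) ` Sigma N' (\<lambda>r. GE r x1) else (\<lambda>e. Suc (2 * e)) ` E' x)" for x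
  define src where "src x p = (if x = x1 then (case prod_decode (p div 2) of (r, e) \<Rightarrow> enc r (Gs r x1 e)) else HS x ((p - 1) div 2))" for x p
  define tgt where "tgt x p = (if x = x1 then (case prod_decode (p div 2) of (r, e) \<Rightarrow> enc r (Gt r x1 e)) else HT x ((p - 1) div 2))" for x p
  have src1[simp]: "src x1 (2 * enc r e) = enc r (Gs r x1 e)" for r e by (simp add: src_def)
  have tgt1[simp]: "tgt x1 (2 * enc r e) = enc r (Gt r x1 e)" for r e by (simp add: tgt_def)
  have srcy[simp]: "src y (Suc (2 * e)) = HS y e" if "y \<in> D" for y e using that D(1) by (auto simp: src_def)
  have tgty[simp]: "tgt y (Suc (2 * e)) = HT y e" if "y \<in> D" for y e using that D(1) by (auto simp: tgt_def)
  have E1: "E x1 = (\<lambda>(r,e). 2 * enc r e) ` Sigma N' (\<lambda>r. GE r x1)" by (simp add: E_def)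
  have Ey: "E y = (\<lambda>e. Suc (2 * e)) ` E' y" if "y \<in> D" for y using that D(1) by (auto simp: E_def)
  have NnI: "enc r n \<in> Nn" if "r \<in> N'" "n \<in> GN r" for r n using that by (auto simp: Nn_def)
  have Bsub: "B r \<subseteq> Nn" if "r \<in> N'" for r using that NnI by (auto simp: B_def)
  have Bdec: "r = s" if "enc r n \<in> B s" for r n s using that by (auto simp: B_def)
  define Rall where "Rall = rel (insert x1 D) E src tgt"
  have inner: "(enc r n, enc r m) \<in> (Rall \<union> Rall\<inverse>)\<^sup>*" if r: "r \<in> N'" and nm: "n \<in> GN r" "m \<in> GN r" for r n m
  proof -
    have "(n, m) \<in> (rel {x1} (GE r) (Gs r) (Gt r) \<union> (rel {x1} (GE r) (Gs r) (Gt r))\<inverse>)\<^sup>*"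
      using gr(10)[OF r nm] .
    then show ?thesis
    proof (rule path_map)
      fix u v assume "(u, v) \<in> rel {x1} (GE r) (Gs r) (Gt r)"
      then obtain e where e: "e \<in> GE r x1" "u = Gs r x1 e" "v = Gt r x1 e" by (auto simp: rel_def)
      have "2 * enc r e \<in> E x1" using e(1) r unfolding E1 by force
      then have "(src x1 (2 * enc r e), tgt x1 (2 * enc r e)) \<in> Rall" unfolding Rall_def rel_def by blast
      then have "(enc r u, enc r v) \<in> Rall" using e by simp
      then show "(enc r u, enc r v) \<in> (Rall \<union> Rall\<inverse>)\<^sup>*" by blast
    qed
  qed
  have link: "\<exists>a b. a \<in> GN (src' y e) \<and> b \<in> GN (tgt' y e) \<and> (enc (src' y e) a, enc (tgt' y e) b) \<in> Rall"
    if ye: "y \<in> D" "e \<in> E' y" for y e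
  proof -
    obtain a where a: "a \<in> GN (src' y e)" "HS y e = enc (src' y e) a" using HSb[OF ye] by (auto simp: B_def)
    obtain b where b: "b \<in> GN (tgt' y e)" "HT y e = enc (tgt' y e) b" using HTb[OF ye] by (auto simp: B_def)
    have "Suc (2 * e) \<in> E y" using Ey[OF ye(1)] ye(2) by simp
    then have "(src y (Suc (2 * e)), tgt y (Suc (2 * e))) \<in> Rall" using ye(1) unfolding Rall_def rel_def by blast
    then show ?thesis using a b ye(1) by auto
  qed
  have outer: "\<forall>n\<in>GN r. \<forall>m\<in>GN s. (enc r n, enc s m) \<in> (Rall \<union> Rall\<inverse>)\<^sup>*"
    if "(r, s) \<in> (rel D E' src' tgt' \<union> (rel D E' src' tgt')\<inverse>)\<^sup>*" "r \<in> N'" for r s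
    using that(1)
  proof (induction rule: rtrancl_induct)
    case base
    then show ?case using inner[OF that(2)] by blast
  next
    case (step s s')
    have "\<exists>a\<in>GN s. \<exists>b\<in>GN s'. (enc s a, enc s' b) \<in> (Rall \<union> Rall\<inverse>)\<^sup>*"
    proof (cases "(s, s') \<in> rel D E' src' tgt'")
      case True
      then obtain y e where ye: "y \<in> D" "e \<in> E' y" "s = src' y e" "s' = tgt' y e" by (auto simp: rel_def)
      then show ?thesis using link[OF ye(1,2)] by blast
    next
      case False
      then have "(s', s) \<in> rel D E' src' tgt'" using step.hyps(2) by auto
      then obtain y e where ye: "y \<in> D" "e \<in> E' y" "s' = src' y e" "s = tgt' y e" by (auto simp: rel_def)
      then obtain a b where "a \<in> GN s'" "b \<in> GN s" "(enc s' a, enc s b) \<in> Rall" using link[OF ye(1,2)] by blast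
      then show ?thesis by blast
    qed
    then obtain a b where ab: "a \<in> GN s" "b \<in> GN s'" "(enc s a, enc s' b) \<in> (Rall \<union> Rall\<inverse>)\<^sup>*" by blast
    have s'N: "s' \<in> N'"
    proof (cases "(s, s') \<in> rel D E' src' tgt'")
      case True
      then show ?thesis using g(6) by (auto simp: rel_def)
    next
      case False
      then have "(s', s) \<in> rel D E' src' tgt'" using step.hyps(2) by auto
      then show ?thesis using g(5) by (auto simp: rel_def)
    qed
    show ?case
    proof (intro ballI)
      fix n m assume n: "n \<in> GN r" and m: "m \<in> GN s'"
      have "(enc r n, enc s a) \<in> (Rall \<union> Rall\<inverse>)\<^sup>*" using step.IH n ab(1) by blast
      also have "(enc s a, enc s' b) \<in> (Rall \<union> Rall\<inverse>)\<^sup>*" using ab(3) .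
      also have "(enc s' b, enc s' m) \<in> (Rall \<union> Rall\<inverse>)\<^sup>*" using inner[OF s'N ab(2) m] .
      finally show "(enc r n, enc s' m) \<in> (Rall \<union> Rall\<inverse>)\<^sup>*" .
    qed
  qed
  have Nn_cases: "\<exists>r n. p = enc r n \<and> r \<in> N' \<and> n \<in> GN r" if "p \<in> Nn" for p
    using that by (auto simp: Nn_def)
  have sg: "sharing_graph S \<sigma>' Nn E src tgt lab"
    apply (rule sg_intro)
             apply (unfold D(2))
    subgoal using finGN g(1) by (auto simp: Nn_def)
    subgoal
    proof -
      obtain r where "r \<in> N'" using g(2) by blast
      moreover obtain n where "n \<in> GN r" using gr(2)[OF \<open>r \<in> N'\<close>] by blast
      ultimately show ?thesis using NnI by blast
    qed
    subgoal for p using Nn_cases gr(3) by fastforce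
    subgoal for x
    proof -
      assume x: "x \<in> insert x1 D"
      show ?thesis
      proof (cases "x = x1")
        case True
        have "finite (Sigma N' (\<lambda>r. GE r x1))" using g(1) gr(4)[OF _ x1s] by blast
        then show ?thesis unfolding True E1 by blast
      next
        case False
        then show ?thesis using x Ey g(4) by auto
      qed
    qed
    subgoal for x p
    proof -
      assume x: "x \<in> insert x1 D" and p: "p \<in> E x"
      show ?thesis
      proof (cases "x = x1")
        case True
        then obtain r e where "r \<in> N'" "e \<in> GE r x1" "p = 2 * enc r e" using p[unfolded True E1] by auto
        then show ?thesis using True gr(5)[OF _ x1s] NnI by simp
      next
        case False
        then have y: "x \<in> D" using x by simp
        then obtain e where e: "e \<in> E' x" "p = Suc (2 * e)" using p Ey by auto
        have "HS x e \<in> B (src' x e)" using HSb[OF y e(1)] .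
        moreover have "B (src' x e) \<subseteq> Nn" using Bsub g(5)[OF y e(1)] .
        ultimately show ?thesis using e y by auto
      qed
    qed
    subgoal for x p
    proof -
      assume x: "x \<in> insert x1 D" and p: "p \<in> E x"
      show ?thesis
      proof (cases "x = x1")
        case True
        then obtain r e where "r \<in> N'" "e \<in> GE r x1" "p = 2 * enc r e" using p[unfolded True E1] by auto
        then show ?thesis using True gr(6)[OF _ x1s] NnI by simp
      next
        case False
        then have y: "x \<in> D" using x by simp
        then obtain e where e: "e \<in> E' x" "p = Suc (2 * e)" using p Ey by auto
        have "HT x e \<in> B (tgt' x e)" using HTb[OF y e(1)] .
        moreover have "B (tgt' x e) \<subseteq> Nn" using Bsub g(6)[OF y e(1)] .
        ultimately show ?thesis using e y by auto
      qed
    qed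
    subgoal for p x
    proof -
      assume p: "p \<in> Nn" and x: "x \<in> insert x1 D"
      obtain r n where rn: "p = enc r n" "r \<in> N'" "n \<in> GN r" using Nn_cases[OF p] by blast
      show ?thesis
      proof (cases "x = x1")
        case True
        have "{e\<in>E x. src x e = p} = (\<lambda>e. 2 * enc r e) ` {e\<in>GE r x1. Gs r x1 e = n}"
          unfolding True E1 using rn by force
        moreover have "inj_on (\<lambda>e. 2 * enc r e) {e\<in>GE r x1. Gs r x1 e = n}" by (auto simp: inj_on_def)
        ultimately have "card {e\<in>E x. src x e = p} = card {e\<in>GE r x1. Gs r x1 e = n}" by (simp add: card_image)
        then show ?thesis using gr(7)[OF rn(2) rn(3) x1s] rn True by simp
      next
        case False
        then have y: "x \<in> D" using x by simp
        have "{e\<in>E x. src x e = p} = (\<lambda>e. Suc (2 * e)) ` {e\<in>E' x. src' x e = r \<and> HS x e = p}"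
        proof
          show "{e\<in>E x. src x e = p} \<subseteq> (\<lambda>e. Suc (2 * e)) ` {e\<in>E' x. src' x e = r \<and> HS x e = p}"
          proof
            fix q assume "q \<in> {e\<in>E x. src x e = p}"
            then obtain e where e: "e \<in> E' x" "q = Suc (2 * e)" "HS x e = p" using Ey[OF y] y by auto
            then have "src' x e = r" using HSb[OF y e(1)] Bdec rn(1) by metis
            then show "q \<in> (\<lambda>e. Suc (2 * e)) ` {e\<in>E' x. src' x e = r \<and> HS x e = p}" using e by auto
          qed
        next
          show "(\<lambda>e. Suc (2 * e)) ` {e\<in>E' x. src' x e = r \<and> HS x e = p} \<subseteq> {e\<in>E x. src x e = p}"
            using Ey[OF y] y by auto
        qed
        moreover have "inj_on (\<lambda>e::nat. Suc (2 * e)) A" for A by (auto simp: inj_on_def)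
        ultimately have "card {e\<in>E x. src x e = p} = card {e\<in>E' x. src' x e = r \<and> HS x e = p}" by (simp add: card_image)
        also have "\<dots> = chi (lab p) (Var x :: ('f,'v) trm)"
          using HS[OF y] rn by (auto simp: B_def)
        finally show ?thesis .
      qed
    qed
    subgoal for p x
    proof -
      assume p: "p \<in> Nn" and x: "x \<in> insert x1 D"
      obtain r n where rn: "p = enc r n" "r \<in> N'" "n \<in> GN r" using Nn_cases[OF p] by blast
      show ?thesis
      proof (cases "x = x1")
        case True
        have "{e\<in>E x. tgt x e = p} = (\<lambda>e. 2 * enc r e) ` {e\<in>GE r x1. Gt r x1 e = n}"
          unfolding True E1 using rn by force
        moreover have "inj_on (\<lambda>e. 2 * enc r e) {e\<in>GE r x1. Gt r x1 e = n}" by (auto simp: inj_on_def)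
        ultimately have "card {e\<in>E x. tgt x e = p} = card {e\<in>GE r x1. Gt r x1 e = n}" by (simp add: card_image)
        then show ?thesis using gr(8)[OF rn(2) rn(3) x1s] rn True D(5) by simp
      next
        case False
        then have y: "x \<in> D" using x by simp
        have "{e\<in>E x. tgt x e = p} = (\<lambda>e. Suc (2 * e)) ` {e\<in>E' x. tgt' x e = r \<and> HT x e = p}"
        proof
          show "{e\<in>E x. tgt x e = p} \<subseteq> (\<lambda>e. Suc (2 * e)) ` {e\<in>E' x. tgt' x e = r \<and> HT x e = p}"
          proof
            fix q assume "q \<in> {e\<in>E x. tgt x e = p}"
            then obtain e where e: "e \<in> E' x" "q = Suc (2 * e)" "HT x e = p" using Ey[OF y] y by auto
            then have "tgt' x e = r" using HTb[OF y e(1)] Bdec rn(1) by metis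
            then show "q \<in> (\<lambda>e. Suc (2 * e)) ` {e\<in>E' x. tgt' x e = r \<and> HT x e = p}" using e by auto
          qed
        next
          show "(\<lambda>e. Suc (2 * e)) ` {e\<in>E' x. tgt' x e = r \<and> HT x e = p} \<subseteq> {e\<in>E x. tgt x e = p}"
            using Ey[OF y] y by auto
        qed
        moreover have "inj_on (\<lambda>e::nat. Suc (2 * e)) A" for A by (auto simp: inj_on_def)
        ultimately have "card {e\<in>E x. tgt x e = p} = card {e\<in>E' x. tgt' x e = r \<and> HT x e = p}" by (simp add: card_image)
        also have "\<dots> = chi (lab p) (\<theta> x)"
          using HT[OF y] rn by (auto simp: B_def)
        finally show ?thesis using D(6)[OF y] by simp
      qed
    qed
    subgoal for x y
    proof -
      assume x: "x \<in> insert x1 D" and y: "y \<in> insert x1 D" and xy: "x \<noteq> y"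
      show ?thesis
      proof (cases "x = x1")
        case True
        then have "y \<in> D" using y xy by simp
        have "\<forall>q\<in>E x1. even q" unfolding E1 by auto
        moreover have "\<forall>q\<in>E y. odd q" unfolding Ey[OF \<open>y \<in> D\<close>] by auto
        ultimately show ?thesis using True by blast
      next
        case False
        then have x': "x \<in> D" using x by simp
        show ?thesis
        proof (cases "y = x1")
          case True
          have "\<forall>q\<in>E x1. even q" unfolding E1 by auto
          moreover have "\<forall>q\<in>E x. odd q" unfolding Ey[OF x'] by auto
          ultimately show ?thesis using True by blast
        next
          case False
          then have "y \<in> D" using y by simp
          then have "E' x \<inter> E' y = {}" using g(9) x' xy by blast
          then show ?thesis unfolding Ey[OF x'] Ey[OF \<open>y \<in> D\<close>] by auto
        qed
      qed
    qed
    subgoal for p q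
    proof -
      assume p: "p \<in> Nn" and q: "q \<in> Nn"
      obtain r n where rn: "p = enc r n" "r \<in> N'" "n \<in> GN r" using Nn_cases[OF p] by blast
      obtain s m where sm: "q = enc s m" "s \<in> N'" "m \<in> GN s" using Nn_cases[OF q] by blast
      have "(r, s) \<in> (rel D E' src' tgt' \<union> (rel D E' src' tgt')\<inverse>)\<^sup>*" using g(10)[OF rn(2) sm(2)] .
      then have "(enc r n, enc s m) \<in> (Rall \<union> Rall\<inverse>)\<^sup>*" using outer rn sm by blast
      then show ?thesis using rn sm by (simp add: Rall_def)
    qed
    done
  have "(\<Sum>p\<in>Nn. lab p) = (\<Sum>(r,n)\<in>Sigma N' GN. lab (enc r n))"
  proof -
    have inj: "inj_on (\<lambda>(r,n). enc r n) (Sigma N' GN)" by (auto simp: inj_on_def)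
    show ?thesis unfolding Nn_def sum.reindex[OF inj] by (rule sum.cong) auto
  qed
  also have "\<dots> = (\<Sum>r\<in>N'. \<Sum>n\<in>GN r. Gl r n)"
    using g(1) finGN by (simp add: sum.Sigma)
  also have "\<dots> = (\<Sum>r\<in>N'. lab' r)" using Glab by simp
  finally show ?thesis unfolding mgu_p_iff using sg by metis
qed


theorem lemma1:
  fixes S :: "'v multiset set"
    and \<theta> :: "'v \<Rightarrow> ('f, 'v) trm"
    and x1 :: 'v and t1 :: "('f, 'v) trm"
  assumes "idempotent \<theta>"
    and "x1 \<notin> sdom \<theta>"
    and "t1 \<noteq> Var x1"
    and "idempotent (\<theta>(x1 := t1))"
  shows "mgu_p S (\<theta>(x1 := t1)) = mgu_p (mgu_p S (Var(x1 := t1))) \<theta>"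
proof -
  have s1: "sdom (Var(x1 := t1) :: 'v \<Rightarrow> ('f, 'v) trm) = {x1}" using assms(3) by (auto simp: sdom_def)
  have s2: "sdom (\<theta>(x1 := t1)) = insert x1 (sdom \<theta>)" using assms(2,3) by (auto simp: sdom_def)
  have e1: "(Var(x1 := t1) :: 'v \<Rightarrow> ('f, 'v) trm) x1 = (\<theta>(x1 := t1)) x1" by simp
  have e2: "(\<theta>(x1 := t1)) y = \<theta> y" if "y \<in> sdom \<theta>" for y using that assms(2) by auto
  show ?thesis
  proof
    show "mgu_p S (\<theta>(x1 := t1)) \<subseteq> mgu_p (mgu_p S (Var(x1 := t1))) \<theta>"
    proof
      fix M assume "M \<in> mgu_p S (\<theta>(x1 := t1))"
      then obtain N E src tgt lab where M: "M = (\<Sum>n\<in>N. lab n)" "sharing_graph S (\<theta>(x1 := t1)) N E src tgt lab"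
        unfolding mgu_p_iff by blast
      show "M \<in> mgu_p (mgu_p S (Var(x1 := t1))) \<theta>"
        unfolding M(1) by (rule dir1[OF assms(2) s2 refl s1 e1 e2 M(2)])
    qed
  next
    show "mgu_p (mgu_p S (Var(x1 := t1))) \<theta> \<subseteq> mgu_p S (\<theta>(x1 := t1))"
    proof
      fix M assume "M \<in> mgu_p (mgu_p S (Var(x1 := t1))) \<theta>"
      then obtain N E src tgt lab where M: "M = (\<Sum>n\<in>N. lab n)" "sharing_graph (mgu_p S (Var(x1 := t1))) \<theta> N E src tgt lab"
        unfolding mgu_p_iff by blast
      show "M \<in> mgu_p S (\<theta>(x1 := t1))"
        unfolding M(1) by (rule dir2[OF assms(2) s2 refl s1 e1 e2 M(2)])
    qed
  qed
qed

end
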